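(* Let $x \geq 1$ and $m \geq 2$ be integers. Let $\mathcal{C}_{m,x}$ be the set of binary words of length $m$ containing no pattern from $\mathcal{T}_x = \{0\mathbf{1}^y0,\ 1\mathbf{0}^y1 : 1\le y\le x\}$ as a contiguous substring, listed in increasing lexicographic order, with $g(\mathbf{c})$ the position (from $0$) of $\mathbf{c}$ in this list. Let $N(k,x) = |\mathcal{C}_{k,x}|$ for $k\ge1$ and $N(k,x)\triangleq 2$ for all integers $k\le 1$. Define the balanced index $g^{\mathrm{b}}(\mathbf{c})$ of $\mathbf{c}\in\mathcal{C}_{m,x}$ by $g^{\mathrm{b}}(\mathbf{c}) = g(\mathbf{c})$ if the leftmost bit of $\mathbf{c}$ is $0$, and $g^{\mathrm{b}}(\mathbf{c}) = N(m,x)-1-g(\mathbf{c})$ if the leftmost bit of $\mathbf{c}$ is $1$ (so that the codewords with indices $g$ and $N(m,x)-1-g$ share the same balanced index). Then for $\mathbf{c} = [c_{m-1}\,c_{m-2}\dots c_0] \in \mathcal{C}_{m,x}$ (with $c_{m-1}$ the leftmost bit): if $c_{m-1}=0$, $$g^{\mathrm{b}}(\mathbf{c}) = \frac12 \sum_{\substack{0\le i\le m-2\\ c_i=1}} N(i-x+1,x);$$ if $c_{m-1}=1$, $$g^{\mathrm{b}}(\mathbf{c}) = \frac12 \sum_{\substack{0\le i\le m-2\\ c_i=0}} N(i-x+1,x).$$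
   Context: $\mathbf{0}^r$ (resp. $\mathbf{1}^r$) denotes a run of $r$ consecutive $0$'s (resp. $1$'s). Lexicographic order on binary words of a fixed length is the order as binary numbers with the leftmost bit most significant. In the paper, a balanced LOCO code encodes each message by the pair of codewords with indices $g$ and $N(m,x)-1-g$ in $\mathcal{C}_{m,x}$, and $g^{\mathrm{b}}$ is the common index of this pair (equal to the index of the member beginning with $0$). *)

theory Defs
  imports Complex_Main
begin

(* Binary words are bool lists, True = bit 1, head = leftmost (most significant) bit. *)

definition is_substring :: "bool list \<Rightarrow> bool list \<Rightarrow> bool" where
  "is_substring p w \<longleftrightarrow> (\<exists>a b. w = a @ p @ b)"

definition forbidden :: "nat \<Rightarrow> bool list set" where
  "forbidden x = {False # replicate y True @ [False] | y. 1 \<le> y \<and> y \<le> x}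
              \<union> {True # replicate y False @ [True] | y. 1 \<le> y \<and> y \<le> x}"

definition LOCO :: "nat \<Rightarrow> nat \<Rightarrow> bool list set" where
  "LOCO m x = {w. length w = m \<and> (\<forall>p\<in>forbidden x. \<not> is_substring p w)}"

definition bin_val :: "bool list \<Rightarrow> nat" where
  "bin_val w = foldl (\<lambda>acc b. 2 * acc + (if b then 1 else 0)) 0 w"

definition g_idx :: "nat \<Rightarrow> nat \<Rightarrow> bool list \<Rightarrow> nat" where
  "g_idx m x c = card {w \<in> LOCO m x. bin_val w < bin_val c}"

definition N_card :: "int \<Rightarrow> nat \<Rightarrow> nat" where
  "N_card k x = (if k \<le> 1 then 2 else card (LOCO (nat k) x))"

definition gb_idx :: "nat \<Rightarrow> nat \<Rightarrow> bool list \<Rightarrow> nat" where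
  "gb_idx m x c = (if hd c = False then g_idx m x c
                   else N_card (int m) x - 1 - g_idx m x c)"

(* bit c_i of c = [c_{m-1} ... c_0] *)
definition bit_at :: "bool list \<Rightarrow> nat \<Rightarrow> bool" where
  "bit_at c i = c ! (length c - 1 - i)"

end

theory Submission
  imports Defs
begin

definition lc :: "nat \<Rightarrow> bool list \<Rightarrow> bool" where
  "lc x w \<longleftrightarrow> (\<forall>p\<in>forbidden x. \<not> is_substring p w)"

definition bad :: "nat \<Rightarrow> bool \<Rightarrow> bool list \<Rightarrow> bool" where
  "bad x a w \<longleftrightarrow> (\<exists>y. 1 \<le> y \<and> y \<le> x \<and> y < length w \<and> (\<forall>j<y. w!j = (\<not>a)) \<and> w!y = a)"

lemma LOCO_lc: "LOCO m x = {w. length w = m \<and> lc x w}"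
  by (simp add: LOCO_def lc_def)

lemma substr_Cons: "is_substring p (a#w) \<longleftrightarrow> (\<exists>b. a#w = p@b) \<or> is_substring p w"
proof
  assume "is_substring p (a#w)"
  then obtain u b where "a#w = u@p@b" unfolding is_substring_def by blast
  then show "(\<exists>b. a#w = p@b) \<or> is_substring p w"
    by (cases u) (auto simp: is_substring_def)
next
  assume "(\<exists>b. a#w = p@b) \<or> is_substring p w"
  then show "is_substring p (a#w)"
    unfolding is_substring_def by (metis append_Cons append_Nil)
qed

lemma prefix_iff: "(\<exists>b. w = p@b) \<longleftrightarrow> length p \<le> length w \<and> (\<forall>j<length p. w!j = p!j)"
proof
  assume "length p \<le> length w \<and> (\<forall>j<length p. w!j = p!j)"
  then have "take (length p) w = p" by (intro nth_equalityI) auto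
  then show "\<exists>b. w = p@b" by (metis append_take_drop_id)
qed (auto simp: nth_append)

lemma forbidden_iff: "p \<in> forbidden x \<longleftrightarrow> (\<exists>b y. 1\<le>y \<and> y\<le>x \<and> p = b # replicate y (\<not>b) @ [b])"
  unfolding forbidden_def by (auto; metis (full_types))

lemma substr_Nil: "p \<in> forbidden x \<Longrightarrow> \<not> is_substring p []"
  by (auto simp: is_substring_def forbidden_iff)

lemma lc_Nil: "lc x []"
  using substr_Nil lc_def by blast

lemma pref_bad: "(\<exists>p\<in>forbidden x. \<exists>b. a#w = p@b) \<longleftrightarrow> bad x a w"
proof
  assume "\<exists>p\<in>forbidden x. \<exists>b. a#w = p@b"
  then obtain b0 y bb where y: "1\<le>y" "y\<le>x" and e: "a#w = (b0 # replicate y (\<not>b0) @ [b0]) @ bb"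
    by (auto simp: forbidden_iff)
  then have "b0 = a" "w = (replicate y (\<not>a) @ [a]) @ bb" by auto
  then have "length (replicate y (\<not>a) @ [a]) \<le> length w \<and> (\<forall>j<length (replicate y (\<not>a) @ [a]). w!j = (replicate y (\<not>a) @ [a])!j)"
    using prefix_iff by blast
  then show "bad x a w" unfolding bad_def using y
    by (intro exI[of _ y]) (auto simp: nth_append)
next
  assume "bad x a w"
  then obtain y where y: "1 \<le> y" "y \<le> x" "y < length w" "\<forall>j<y. w!j = (\<not>a)" "w!y = a"
    unfolding bad_def by blast
  have "length (replicate y (\<not>a) @ [a]) \<le> length w \<and> (\<forall>j<length (replicate y (\<not>a) @ [a]). w!j = (replicate y (\<not>a) @ [a])!j)"
    using y by (auto simp: nth_append less_Suc_eq)
  then obtain bb where "w = (replicate y (\<not>a) @ [a]) @ bb" using prefix_iff by blast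
  then have "a#w = (a # replicate y (\<not>a) @ [a]) @ bb" by simp
  moreover have "a # replicate y (\<not>a) @ [a] \<in> forbidden x" using y forbidden_iff by blast
  ultimately show "\<exists>p\<in>forbidden x. \<exists>b. a#w = p@b" by blast
qed

lemma lc_Cons: "lc x (a#w) \<longleftrightarrow> lc x w \<and> \<not> bad x a w"
  unfolding lc_def using substr_Cons pref_bad by blast

lemma bad_Not: "bad x a (map Not w) = bad x (\<not>a) w"
  unfolding bad_def by auto

lemma lc_Not: "lc x (map Not w) = lc x w"
  by (induction w) (auto simp: lc_Cons lc_Nil bad_Not)

lemma foldl_bv: "foldl (\<lambda>acc b. 2 * acc + (if b then 1 else 0)) (acc::nat) w
   = acc * 2 ^ length w + foldl (\<lambda>acc b. 2 * acc + (if b then 1 else 0)) 0 w"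
proof (induction w arbitrary: acc)
  case (Cons a w)
  show ?case using Cons[of "2 * acc + (if a then 1 else 0)"] Cons[of "(if a then 1 else 0)"]
    by (simp add: algebra_simps)
qed simp

lemma bv_Nil[simp]: "bin_val [] = 0" by (simp add: bin_val_def)

lemma bv_Cons: "bin_val (a#w) = (if a then 2^length w else 0) + bin_val w"
  unfolding bin_val_def by (subst foldl_Cons, subst foldl_bv) simp

lemma bv_lt: "bin_val w < 2 ^ length w"
  by (induction w) (auto simp: bv_Cons)

lemma bv_inj: "length u = length w \<Longrightarrow> bin_val u = bin_val w \<Longrightarrow> u = w"
proof (induction u arbitrary: w)
  case (Cons a u)
  then obtain b v where w: "w = b#v" by (cases w) auto
  have l: "length u = length v" using Cons w by simp
  have "a = b" using Cons.prems bv_lt[of u] bv_lt[of v] l unfolding w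
    by (auto simp: bv_Cons split: if_splits)
  then show ?case using Cons l w by (auto simp: bv_Cons)
qed simp

lemma bv_append: "bin_val (u@v) = bin_val u * 2^length v + bin_val v"
  by (induction u) (auto simp: bv_Cons power_add algebra_simps)

lemma bv_Not: "bin_val (map Not w) + bin_val w + 1 = 2^length w"
  by (induction w) (auto simp: bv_Cons)

lemma bv_nth_ge: "y < length w \<Longrightarrow> w!y \<Longrightarrow> 2^(length w - 1 - y) \<le> bin_val w"
proof (induction w arbitrary: y)
  case (Cons a w)
  show ?case
  proof (cases y)
    case 0 then show ?thesis using Cons by (simp add: bv_Cons)
  next
    case (Suc z) then show ?thesis using Cons.IH[of z] Cons.prems by (simp add: bv_Cons)
  qed
qed simp

lemma bv_hd: "w \<noteq> [] \<Longrightarrow> (bin_val w < 2^(length w - 1)) \<longleftrightarrow> \<not> hd w"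
  by (cases w) (auto simp: bv_Cons bv_lt)

lemma bv_lt_diff: "length u = length v \<Longrightarrow> (\<forall>j<y. u!j = v!j) \<Longrightarrow> y < length u \<Longrightarrow> \<not> u!y \<Longrightarrow> v!y
   \<Longrightarrow> bin_val u < bin_val v"
proof (induction u arbitrary: v y)
  case (Cons a u)
  then obtain b w where v: "v = b#w" by (cases v) auto
  show ?case
  proof (cases y)
    case 0 then show ?thesis using Cons v bv_lt[of u] by (simp add: bv_Cons)
  next
    case (Suc z)
    have "a = b" using Cons.prems(2) Suc v by auto
    moreover have "\<forall>j<z. u!j = w!j"
    proof (intro allI impI)
      fix j assume "j < z"
      then show "u!j = w!j" using Cons.prems(2) Suc v by (metis Suc_mono nth_Cons_Suc)
    qed
    then have "bin_val u < bin_val w"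
      using Cons.IH[of w z] Cons.prems Suc v by auto
    ultimately show ?thesis using v Cons.prems(1) by (simp add: bv_Cons)
  qed
qed simp

lemma bv_replicate_False: "bin_val (replicate k False @ w) = bin_val w"
  by (induction k) (auto simp: bv_Cons)

lemma bv_replicate_True: "bin_val (replicate k True) + 1 = 2^k"
  by (induction k) (auto simp: bv_Cons)

lemma finite_LOCO: "finite (LOCO n x)"
proof -
  have "LOCO n x \<subseteq> {w. set w \<subseteq> UNIV \<and> length w = n}" by (auto simp: LOCO_def)
  moreover have "finite {w::bool list. set w \<subseteq> UNIV \<and> length w = n}"
    by (rule finite_lists_length_eq) simp
  ultimately show ?thesis by (rule finite_subset)
qed

lemma run_prefix: "\<not> bad x a w \<Longrightarrow> w \<noteq> [] \<Longrightarrow> hd w = (\<not>a) \<Longrightarrow> j < min (x+1) (length w) \<Longrightarrow> w!j = (\<not>a)"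
proof (induction j rule: less_induct)
  case (less j)
  show ?case
  proof (cases j)
    case 0 then show ?thesis using less.prems by (cases w) auto
  next
    case (Suc z)
    show ?thesis
    proof (rule ccontr)
      assume "w!j \<noteq> (\<not>a)"
      then have "w!j = a" by auto
      then have "bad x a w" unfolding bad_def using less Suc
        by (intro exI[of _ j]) auto
      then show False using less.prems by blast
    qed
  qed
qed

lemma not_bad_rep: "\<not> bad x b (replicate k b)"
proof
  assume "bad x b (replicate k b)"
  then obtain y where "1 \<le> y" "y < k" "\<forall>j<y. replicate k b ! j = (\<not>b)"
    unfolding bad_def by auto
  then have "replicate k b ! 0 = (\<not>b)" by auto
  then show False using \<open>y < k\<close> by auto
qed

lemma lc_replicate: "lc x (replicate k b)"
  by (induction k) (auto simp: lc_Cons lc_Nil not_bad_rep)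

lemma lc_e: "lc x (replicate k False @ replicate j True)"
proof (induction k)
  case 0 then show ?case using lc_replicate by simp
next
  case (Suc k)
  have "\<not> bad x False (replicate k False @ replicate j True)"
    unfolding bad_def
  proof
    assume "\<exists>y\<ge>1. y \<le> x \<and> y < length (replicate k False @ replicate j True) \<and>
        (\<forall>ja<y. (replicate k False @ replicate j True) ! ja = (\<not> False)) \<and>
        (replicate k False @ replicate j True) ! y = False"
    then obtain y where y: "1 \<le> y" "y < k + j" "\<forall>ja<y. (replicate k False @ replicate j True) ! ja"
       "\<not> (replicate k False @ replicate j True) ! y" by auto
    show False
    proof (cases k)
      case 0 then show ?thesis using y by (auto simp: nth_append)
    next
      case (Suc k') then show ?thesis using y(3)[rule_format, of 0] y(1) by (auto simp: nth_append)
    qed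
  qed
  then show ?case using Suc by (simp add: lc_Cons)
qed

lemma map_Not_Not[simp]: "map Not (map Not w) = w"
  by (induction w) auto

lemma inj_Not: "inj_on (map Not) S"
  by (rule inj_onI) (metis map_Not_Not)

lemma LOCO_Not: "(map Not w \<in> LOCO n x) = (w \<in> LOCO n x)"
  by (simp add: LOCO_lc lc_Not)

lemma card_L0: assumes "n \<ge> 1" shows "2 * card {w \<in> LOCO n x. \<not>hd w} = card (LOCO n x)"
proof -
  let ?L0 = "{w \<in> LOCO n x. \<not>hd w}" and ?L1 = "{w \<in> LOCO n x. hd w}"
  have ne: "w \<in> LOCO n x \<Longrightarrow> w \<noteq> []" for w using assms by (auto simp: LOCO_def)
  have hdN: "w \<noteq> [] \<Longrightarrow> hd (map Not w) = (\<not> hd w)" for w by (cases w) auto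
  have "?L1 = map Not ` ?L0"
  proof (rule set_eqI, rule iffI)
    fix w assume "w \<in> ?L1"
    then have "map Not w \<in> ?L0" using ne hdN LOCO_Not by auto
    then show "w \<in> map Not ` ?L0" by (metis image_eqI map_Not_Not)
  next
    fix w assume "w \<in> map Not ` ?L0"
    then show "w \<in> ?L1" using ne hdN LOCO_Not by auto
  qed
  then have c1: "card ?L1 = card ?L0" using card_image[OF inj_Not, of ?L0] by simp
  have "LOCO n x = ?L0 \<union> ?L1" by auto
  moreover have "?L0 \<inter> ?L1 = {}" by auto
  ultimately have "card (LOCO n x) = card ?L0 + card ?L1"
    using finite_LOCO card_Un_disjoint[of ?L0 ?L1] by simp
  then show ?thesis using c1 by simp
qed

lemma eq_single: assumes "c \<in> LOCO n x"
  shows "{w \<in> LOCO n x. bin_val w = bin_val c} = {c}"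
proof -
  have "w = c" if "w \<in> LOCO n x" "bin_val w = bin_val c" for w
    using bv_inj[of w c] that assms by (simp add: LOCO_def)
  then show ?thesis using assms by blast
qed

lemma g_compl: assumes c: "c \<in> LOCO n x"
  shows "g_idx n x (map Not c) + g_idx n x c + 1 = card (LOCO n x)"
proof -
  let ?L = "LOCO n x"
  let ?S1 = "{w \<in> ?L. bin_val w < bin_val c}" and ?S2 = "{w \<in> ?L. bin_val c < bin_val w}"
  have len: "w \<in> ?L \<Longrightarrow> length w = n" for w by (simp add: LOCO_def)
  have eq: "{w \<in> ?L. bin_val w = bin_val c} = {c}" by (rule eq_single[OF c])
  have "?L \<subseteq> ?S1 \<union> {c} \<union> ?S2"
  proof
    fix w assume w: "w \<in> ?L"
    show "w \<in> ?S1 \<union> {c} \<union> ?S2"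
    proof (cases "bin_val w < bin_val c")
      case True then show ?thesis using w by blast
    next
      case False
      show ?thesis
      proof (cases "bin_val w = bin_val c")
        case True then have "w \<in> {c}" using w eq by blast
        then show ?thesis by blast
      next
        case False2: False
        then have "bin_val c < bin_val w" using False by linarith
        then show ?thesis using w by blast
      qed
    qed
  qed
  then have "?L = ?S1 \<union> {c} \<union> ?S2" using c by blast
  moreover have fin: "finite ?S1" "finite ?S2" using finite_LOCO by auto
  have "(?S1 \<union> {c}) \<inter> ?S2 = {}" by auto
  then have "card (?S1 \<union> {c} \<union> ?S2) = card (?S1 \<union> {c}) + card ?S2"
    using fin by (intro card_Un_disjoint) auto
  moreover have "card (?S1 \<union> {c}) = card ?S1 + 1" using fin by simp
  ultimately have cL: "card ?L = card ?S1 + 1 + card ?S2"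
    using \<open>?L = ?S1 \<union> {c} \<union> ?S2\<close> by simp
  have bN: "w \<in> ?L \<Longrightarrow> bin_val (map Not w) + bin_val w + 1 = 2^n" for w
    using bv_Not len by metis
  have "{w \<in> ?L. bin_val w < bin_val (map Not c)} = map Not ` ?S2"
  proof (rule set_eqI, rule iffI)
    fix w assume w: "w \<in> {w \<in> ?L. bin_val w < bin_val (map Not c)}"
    have m: "map Not w \<in> ?L" using w LOCO_Not by blast
    have w1: "bin_val (map Not w) + bin_val w + 1 = 2^n" using bN w by blast
    have c1: "bin_val (map Not c) + bin_val c + 1 = 2^n" using bN c by blast
    have "bin_val w < bin_val (map Not c)" using w by blast
    then have "bin_val c < bin_val (map Not w)" using w1 c1 by linarith
    then have "map Not w \<in> ?S2" using m by blast
    then show "w \<in> map Not ` ?S2" by (metis image_eqI map_Not_Not)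
  next
    fix w assume "w \<in> map Not ` ?S2"
    then obtain v where v: "v \<in> ?S2" "w = map Not v" by auto
    have m: "w \<in> ?L" using v LOCO_Not by blast
    have v1: "bin_val (map Not v) + bin_val v + 1 = 2^n" using bN v(1) by blast
    have c1: "bin_val (map Not c) + bin_val c + 1 = 2^n" using bN c by blast
    have "bin_val c < bin_val v" using v(1) by blast
    then have "bin_val (map Not v) < bin_val (map Not c)" using v1 c1 by linarith
    then have "bin_val w < bin_val (map Not c)" using v(2) by simp
    then show "w \<in> {w \<in> ?L. bin_val w < bin_val (map Not c)}" using m by blast
  qed
  then have "g_idx n x (map Not c) = card (map Not ` ?S2)"
    unfolding g_idx_def by simp
  also have "\<dots> = card ?S2" by (rule card_image[OF inj_Not])
  finally have "g_idx n x (map Not c) = card ?S2" .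
  moreover have "g_idx n x c = card ?S1" by (simp add: g_idx_def)
  ultimately show ?thesis using cL by simp
qed

lemma g_lt: "c \<in> LOCO n x \<Longrightarrow> g_idx n x c < card (LOCO n x)"
  using g_compl[of c n x] by simp

fun Fw :: "nat \<Rightarrow> bool list \<Rightarrow> nat" where
  "Fw x [] = 0"
| "Fw x (a#w) = (if a then N_card (int (length w) - int x + 1) x else 0) + Fw x w"

lemma Fw_rep_False: "Fw x (replicate k False @ w) = Fw x w"
  by (induction k) auto

lemma Fw_Not: "Fw x (map Not w) + Fw x w = Fw x (replicate (length w) True)"
  by (induction w) auto

lemma bad_False_hd: "bad x False w \<Longrightarrow> w \<noteq> [] \<and> hd w"
  unfolding bad_def by (cases w) force+

lemma cardA:
  assumes n: "n \<ge> 1"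
    and HP: "\<And>c. c \<in> LOCO n x \<Longrightarrow> hd c = False \<Longrightarrow> 2 * g_idx n x c = Fw x (tl c)"
  shows "card (LOCO n x) = 2 + Fw x (replicate (n-1) True)"
proof -
  define c where "c = False # replicate (n-1) True"
  have cL: "c \<in> LOCO n x"
    using n unfolding c_def LOCO_lc by (auto simp: lc_Cons lc_replicate bad_def)
  have bc: "bin_val c + 1 = 2^(n-1)" unfolding c_def using bv_replicate_True by (simp add: bv_Cons)
  let ?L0 = "{w \<in> LOCO n x. \<not>hd w}"
  have len: "w \<in> LOCO n x \<Longrightarrow> length w = n" for w by (simp add: LOCO_def)
  have ne: "w \<in> LOCO n x \<Longrightarrow> w \<noteq> []" for w using n len by force
  have "{w \<in> LOCO n x. bin_val w < bin_val c} = ?L0 - {c}"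
  proof (rule set_eqI, rule iffI)
    fix w assume w: "w \<in> {w \<in> LOCO n x. bin_val w < bin_val c}"
    then have "\<not> hd w" using bv_hd[of w] ne len bc by force
    then show "w \<in> ?L0 - {c}" using w by auto
  next
    fix w assume w: "w \<in> ?L0 - {c}"
    then have "bin_val w < 2^(n-1)" using bv_hd[of w] ne len by force
    moreover have "bin_val w \<noteq> bin_val c" using w bv_inj len cL by blast
    ultimately show "w \<in> {w \<in> LOCO n x. bin_val w < bin_val c}" using w bc by auto
  qed
  moreover have "c \<in> ?L0" using cL c_def by simp
  ultimately have "g_idx n x c = card ?L0 - 1" unfolding g_idx_def
    using finite_LOCO by simp
  moreover have "card ?L0 \<ge> 1" using \<open>c \<in> ?L0\<close> finite_LOCO
    by (metis (no_types, lifting) One_nat_def Suc_leI card_gt_0_iff empty_iff finite_subset mem_Collect_eq subsetI)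
  moreover have "2 * g_idx n x c = Fw x (replicate (n-1) True)" using HP[OF cL] c_def by simp
  ultimately show ?thesis using card_L0[OF n, of x] by linarith
qed

lemma cardB:
  assumes n: "n \<ge> 1"
    and HP: "\<And>c. c \<in> LOCO n x \<Longrightarrow> hd c = False \<Longrightarrow> 2 * g_idx n x c = Fw x (tl c)"
  shows "2 * card {w \<in> LOCO n x. bad x False w} + Fw x (replicate (n - min (x+1) n) True) + 2
         = card (LOCO n x)"
proof -
  define k where "k = min (x+1) n"
  have k1: "1 \<le> k" "k \<le> n" using n by (auto simp: k_def)
  define e where "e = replicate k False @ replicate (n-k) True"
  have eL: "e \<in> LOCO n x" unfolding e_def LOCO_lc using lc_e k1 by auto
  have e2: "e = False # (replicate (k-1) False @ replicate (n-k) True)"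
    unfolding e_def using k1 by (cases k) auto
  have ge: "2 * g_idx n x e = Fw x (replicate (n-k) True)"
    using HP[OF eL] e2 by (simp add: Fw_rep_False)
  have be: "bin_val e + 1 = 2^(n-k)" unfolding e_def
    using bv_replicate_False bv_replicate_True by simp
  have len: "w \<in> LOCO n x \<Longrightarrow> length w = n" for w by (simp add: LOCO_def)
  have ne: "w \<in> LOCO n x \<Longrightarrow> w \<noteq> []" for w using n len by force
  let ?L = "LOCO n x"
  let ?LZ = "{w \<in> ?L. \<not>hd w}" and ?Lt = "{w \<in> ?L. bin_val w < 2^(n-k)}"
    and ?Bs = "{w \<in> ?L. \<not>hd w \<and> bad x True w}" and ?S1 = "{w \<in> ?L. bin_val w < bin_val e}"
  have fin: "finite ?LZ" "finite ?Lt" "finite ?S1" using finite_LOCO by auto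
  have "?Lt = ?S1 \<union> {e}"
  proof
    show "?Lt \<subseteq> ?S1 \<union> {e}"
    proof
      fix w assume w: "w \<in> ?Lt"
      show "w \<in> ?S1 \<union> {e}"
      proof (cases "bin_val w < bin_val e")
        case True then show ?thesis using w by blast
      next
        case False
        then have "bin_val w = bin_val e" using w be by simp
        then have "w \<in> {e}" using eq_single[OF eL] w by blast
        then show ?thesis by blast
      qed
    qed
    show "?S1 \<union> {e} \<subseteq> ?Lt" using eL be by auto
  qed
  then have cLt: "card ?Lt = g_idx n x e + 1" using fin by (simp add: g_idx_def)
  have pw: "(2::nat)^(n-k) \<le> 2^(n-1)" using k1 by (intro power_increasing) auto
  have sub: "?Lt \<subseteq> ?LZ"
  proof
    fix w assume w: "w \<in> ?Lt"
    have lw: "length w = n" using w len by blast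
    have "bin_val w < 2^(n-k)" using w by blast
    then have "bin_val w < 2^(n - 1)" using pw by linarith
    then have "bin_val w < 2^(length w - 1)" using lw by simp
    then show "w \<in> ?LZ" using bv_hd[of w] ne w by blast
  qed
  have "?Bs = ?LZ - ?Lt"
  proof (rule set_eqI, rule iffI)
    fix w assume w: "w \<in> ?Bs"
    then obtain y where y: "1 \<le> y" "y \<le> x" "y < length w" "w!y" unfolding bad_def by auto
    have lw: "length w = n" using w len by blast
    have p1: "2^(length w - 1 - y) \<le> bin_val w" by (rule bv_nth_ge) (use y in auto)
    have p2: "(2::nat)^(n-k) \<le> 2^(length w - 1 - y)"
      using y lw by (intro power_increasing) (auto simp: k_def)
    have "\<not> bin_val w < 2^(n-k)" using order_trans[OF p2 p1] by linarith
    then show "w \<in> ?LZ - ?Lt" using w by blast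
  next
    fix w assume w: "w \<in> ?LZ - ?Lt"
    have lw: "length w = n" using w len by blast
    show "w \<in> ?Bs"
    proof (rule ccontr)
      assume "w \<notin> ?Bs"
      then have nb: "\<not> bad x True w" using w by blast
      have "\<forall>j<k. w!j = False"
        using run_prefix[OF nb] ne w lw by (auto simp: k_def)
      then have "take k w = replicate k False" using lw k1
        by (intro nth_equalityI) auto
      then have "w = replicate k False @ drop k w" by (metis append_take_drop_id)
      then have "bin_val w = bin_val (drop k w)" by (metis bv_replicate_False)
      also have "\<dots> < 2^(n-k)" using bv_lt[of "drop k w"] lw by simp
      finally show False using w by blast
    qed
  qed
  then have cBs: "card ?Bs + card ?Lt = card ?LZ"
    using card_Diff_subset[OF fin(2) sub] card_mono[OF fin(1) sub] by simp
  have hdN: "w \<noteq> [] \<Longrightarrow> hd (map Not w) = (\<not> hd w)" for w by (cases w) auto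
  have "{w \<in> ?L. bad x False w} = map Not ` ?Bs"
  proof (rule set_eqI, rule iffI)
    fix w assume w: "w \<in> {w \<in> ?L. bad x False w}"
    then have "map Not w \<in> ?Bs" using bad_False_hd hdN LOCO_Not bad_Not[of x True w] by auto
    then show "w \<in> map Not ` ?Bs" by (metis image_eqI map_Not_Not)
  next
    fix w assume "w \<in> map Not ` ?Bs"
    then obtain v where v: "v \<in> ?Bs" "w = map Not v" by blast
    have "map Not v \<in> ?L" using v LOCO_Not by blast
    moreover have "bad x False (map Not v)" using v bad_Not[of x False v] by simp
    ultimately show "w \<in> {w \<in> ?L. bad x False w}" using v(2) by blast
  qed
  then have "card {w \<in> ?L. bad x False w} = card ?Bs"
    using card_image[OF inj_Not, of ?Bs] by simp
  then show ?thesis using cBs cLt ge card_L0[OF n, of x] unfolding k_def[symmetric] by linarith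
qed

lemma inj_Cons: "inj_on (Cons a) S" by (rule inj_onI) simp

lemma g_Cons_False: assumes "length c' = m"
  shows "g_idx (Suc m) x (False # c') = card {w \<in> LOCO m x. \<not> bad x False w \<and> bin_val w < bin_val c'}"
proof -
  let ?S = "{w \<in> LOCO m x. \<not> bad x False w \<and> bin_val w < bin_val c'}"
  have "{w \<in> LOCO (Suc m) x. bin_val w < bin_val (False#c')} = Cons False ` ?S"
  proof (rule set_eqI, rule iffI)
    fix w assume w: "w \<in> {w \<in> LOCO (Suc m) x. bin_val w < bin_val (False#c')}"
    then obtain a v where av: "w = a#v" "length v = m" by (cases w) (auto simp: LOCO_def)
    have lc: "lc x (a#v)" and b: "bin_val (a#v) < bin_val c'"
      using w av by (auto simp: LOCO_lc bv_Cons)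
    have "\<not> a" using b bv_lt[of c'] assms av by (auto simp: bv_Cons)
    then have "v \<in> ?S" using lc b av by (auto simp: LOCO_lc lc_Cons bv_Cons)
    then show "w \<in> Cons False ` ?S" using av \<open>\<not> a\<close> by blast
  next
    fix w assume "w \<in> Cons False ` ?S"
    then obtain v where "v \<in> ?S" "w = False # v" by blast
    then show "w \<in> {w \<in> LOCO (Suc m) x. bin_val w < bin_val (False#c')}"
      by (auto simp: LOCO_lc lc_Cons bv_Cons)
  qed
  then show ?thesis unfolding g_idx_def using card_image[OF inj_Cons, of False ?S] by simp
qed

lemma S_hd_False: assumes "c' \<in> LOCO m x" "m \<ge> 1" "hd c' = False"
  shows "{w \<in> LOCO m x. \<not> bad x False w \<and> bin_val w < bin_val c'} = {w \<in> LOCO m x. bin_val w < bin_val c'}"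
proof -
  have len: "w \<in> LOCO m x \<Longrightarrow> length w = m" for w by (simp add: LOCO_def)
  have ne: "w \<in> LOCO m x \<Longrightarrow> w \<noteq> []" for w using assms(2) len by force
  have bc: "bin_val c' < 2^(m-1)" using bv_hd[of c'] assms ne len by force
  have "\<not> bad x False w" if "w \<in> LOCO m x" "bin_val w < bin_val c'" for w
  proof -
    have "\<not> hd w" using bv_hd[of w] that ne len bc by force
    then show ?thesis using bad_False_hd by blast
  qed
  then show ?thesis by blast
qed

lemma S_hd_True: assumes c: "c' \<in> LOCO m x" "m \<ge> 1" "hd c'" "\<not> bad x False c'"
  shows "card {w \<in> LOCO m x. \<not> bad x False w \<and> bin_val w < bin_val c'}
         + card {w \<in> LOCO m x. bad x False w} = g_idx m x c'"
proof -
  let ?B = "{w \<in> LOCO m x. bad x False w}" and ?S = "{w \<in> LOCO m x. bin_val w < bin_val c'}"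
  have len: "w \<in> LOCO m x \<Longrightarrow> length w = m" for w by (simp add: LOCO_def)
  have ne: "w \<in> LOCO m x \<Longrightarrow> w \<noteq> []" for w using assms(2) len by force
  have sub: "?B \<subseteq> ?S"
  proof
    fix w assume w: "w \<in> ?B"
    then obtain y where y: "1 \<le> y" "y \<le> x" "y < length w" "\<forall>j<y. w!j = True" "w!y = False"
      unfolding bad_def by auto
    have lw: "length w = m" "length c' = m" using w c len by auto
    have cp: "c'!j = True" if "j \<le> y" for j
      using run_prefix[OF c(4)] ne[OF c(1)] c(3) that y lw by auto
    have "bin_val w < bin_val c'"
      by (rule bv_lt_diff[of w c' y]) (use lw y cp in auto)
    then show "w \<in> ?S" using w by blast
  qed
  have "{w \<in> LOCO m x. \<not> bad x False w \<and> bin_val w < bin_val c'} = ?S - ?B" by blast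
  moreover have "finite ?S" using finite_LOCO by auto
  ultimately show ?thesis using card_Diff_subset[of ?B ?S] card_mono[of ?S ?B] sub
    unfolding g_idx_def by (simp add: finite_subset)
qed

lemma main_ind:
  assumes x1: "x \<ge> 1"
  shows "c \<in> LOCO n x \<Longrightarrow> n \<ge> 1 \<Longrightarrow> hd c = False \<Longrightarrow> 2 * g_idx n x c = Fw x (tl c)"
proof (induction n arbitrary: c rule: less_induct)
  case (less n)
  show ?case
  proof (cases "n = 1")
    case True
    have "length c = 1" using less.prems True by (simp add: LOCO_def)
    then have c: "c = [False]" using less.prems(3) by (cases c) auto
    have "g_idx n x c = 0" unfolding g_idx_def c by (simp add: bv_Cons)
    then show ?thesis using c by simp
  next
    case False
    then obtain m where nm: "n = Suc m" and m1: "m \<ge> 1" using less.prems(2) by (cases n) auto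
    have lc0: "length c = Suc m" "lc x c" using less.prems nm by (auto simp: LOCO_lc)
    then obtain c' where c: "c = False # c'" using less.prems(3) by (cases c) auto
    have lc': "length c' = m" using lc0 c by simp
    have lcc: "lc x c'" "\<not> bad x False c'" using lc0 c by (auto simp: lc_Cons)
    have cL: "c' \<in> LOCO m x" using lc' lcc by (simp add: LOCO_lc)
    have HPm: "\<And>d. d \<in> LOCO m x \<Longrightarrow> hd d = False \<Longrightarrow> 2 * g_idx m x d = Fw x (tl d)"
      using less.IH nm m1 by auto
    have g1: "g_idx n x c = card {w \<in> LOCO m x. \<not> bad x False w \<and> bin_val w < bin_val c'}"
      using g_Cons_False[OF lc'] nm c by simp
    have ne': "c' \<noteq> []" using lc' m1 by auto
    show ?thesis
    proof (cases "hd c'")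
      case False
      have "g_idx n x c = g_idx m x c'" using g1 S_hd_False[OF cL m1] False by (simp add: g_idx_def)
      moreover have "Fw x (tl c) = Fw x (tl c')" using c ne' False by (cases c') auto
      ultimately show ?thesis using HPm[OF cL] False by simp
    next
      case True
      let ?S = "{w \<in> LOCO m x. \<not> bad x False w \<and> bin_val w < bin_val c'}"
        and ?B = "{w \<in> LOCO m x. bad x False w}"
      have s: "card ?S + card ?B = g_idx m x c'" using S_hd_True[OF cL m1 True lcc(2)] by simp
      have A: "card (LOCO m x) = 2 + Fw x (replicate (m-1) True)" by (rule cardA[OF m1 HPm])
      have B: "2 * card ?B + Fw x (replicate (m - min (x+1) m) True) + 2 = card (LOCO m x)"
        by (rule cardB[OF m1 HPm])
      have C: "N_card (int m - int x) x = 2 + Fw x (replicate (m - min (x+1) m) True)"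
      proof (cases "m \<le> x + 1")
        case True
        then have "min (x+1) m = m" by simp
        moreover have "int m - int x \<le> 1" using True by simp
        ultimately show ?thesis by (simp add: N_card_def)
      next
        case False
        define j where "j = m - x"
        have j: "j \<ge> 2" "j < m" "j \<ge> 1" using False x1 by (auto simp: j_def)
        have "int m - int x = int j" using False by (simp add: j_def)
        then have "N_card (int m - int x) x = card (LOCO j x)" using j by (simp add: N_card_def)
        moreover have HPj: "\<And>d. d \<in> LOCO j x \<Longrightarrow> hd d = False \<Longrightarrow> 2 * g_idx j x d = Fw x (tl d)"
          using less.IH nm j by auto
        moreover have "m - min (x+1) m = j - 1" using False by (simp add: j_def)
        ultimately show ?thesis using cardA[OF j(3) HPj] by simp
      qed
      have gc: "g_idx m x (map Not c') + g_idx m x c' + 1 = card (LOCO m x)" by (rule g_compl[OF cL])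
      have ncL: "map Not c' \<in> LOCO m x" using cL LOCO_Not by blast
      have hn: "hd (map Not c') = False" using True ne' by (cases c') auto
      have h2: "2 * g_idx m x (map Not c') = Fw x (tl (map Not c'))" by (rule HPm[OF ncL hn])
      have tn: "tl (map Not c') = map Not (tl c')" by (simp add: map_tl)
      have fn: "Fw x (map Not (tl c')) + Fw x (tl c') = Fw x (replicate (m-1) True)"
        using Fw_Not[of x "tl c'"] lc' by simp
      have c'e: "c' = True # tl c'" using True ne' by (cases c') auto
      have "Fw x c' = N_card (int (m-1) - int x + 1) x + Fw x (tl c')"
        by (subst c'e) (simp add: lc')
      moreover have "int (m-1) - int x + 1 = int m - int x" using m1 by simp
      ultimately have fc: "Fw x (tl c) = N_card (int m - int x) x + Fw x (tl c')" using c by simp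
      have "g_idx n x c = card ?S" using g1 .
      moreover have h2': "2 * g_idx m x (map Not c') = Fw x (map Not (tl c'))" using h2 tn by simp
      ultimately show ?thesis using s A B C gc fn fc by linarith
    qed
  qed
qed

lemma nth_Cons_rev: "i < length w \<Longrightarrow> (a#w)!(length w - i) = w!(length w - 1 - i)"
proof -
  assume "i < length w"
  then have "length w - i = Suc (length w - 1 - i)" by simp
  then show ?thesis by simp
qed

lemma Fw_sum: "Fw x w = (\<Sum>i\<in>{i. i < length w \<and> w!(length w - 1 - i)}. N_card (int i - int x + 1) x)"
proof (induction w)
  case Nil then show ?case by simp
next
  case (Cons a w)
  let ?S = "{i. i < length w \<and> w!(length w - 1 - i)}"
  have fin: "finite ?S" by simp
  have nS: "length w \<notin> ?S" by simp
  have eq: "{i. i < length (a#w) \<and> (a#w)!(length (a#w) - 1 - i)} = (if a then insert (length w) ?S else ?S)"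
  proof (rule set_eqI)
    fix i
    show "i \<in> {i. i < length (a#w) \<and> (a#w)!(length (a#w) - 1 - i)} \<longleftrightarrow> i \<in> (if a then insert (length w) ?S else ?S)"
    proof (cases "i < length w")
      case True then show ?thesis using nth_Cons_rev[OF True, of a] by auto
    next
      case False
      then show ?thesis by (cases "i = length w") auto
    qed
  qed
  show ?case
  proof (cases a)
    case True
    then show ?thesis using eq Cons.IH fin nS by simp
  next
    case False
    then show ?thesis using eq Cons.IH by simp
  qed
qed

lemma sum_conv: assumes "length c = m" "m \<ge> 2"
  shows "(\<Sum>i\<in>{i. i \<le> m - 2 \<and> bit_at c i = True}. real (N_card (int i - int x + 1) x))
         = real (Fw x (tl c))"
proof -
  obtain a w where c: "c = a#w" using assms by (cases c) auto
  have lw: "length w = m - 1" using assms c by simp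
  have "{i. i \<le> m - 2 \<and> bit_at c i = True} = {i. i < length w \<and> w!(length w - 1 - i)}"
  proof (rule set_eqI)
    fix i
    show "i \<in> {i. i \<le> m - 2 \<and> bit_at c i = True} \<longleftrightarrow> i \<in> {i. i < length w \<and> w!(length w - 1 - i)}"
    proof (cases "i < length w")
      case True
      have "bit_at c i = (a#w)!(length w - i)" unfolding bit_at_def c by simp
      then show ?thesis using nth_Cons_rev[OF True, of a] True lw assms by auto
    next
      case False then show ?thesis using lw assms by auto
    qed
  qed
  then show ?thesis using Fw_sum[of x w] c by (simp add: of_nat_sum)
qed

theorem theorem3:
  fixes x m :: nat and c :: "bool list"
  assumes "x \<ge> 1" and "m \<ge> 2" and "c \<in> LOCO m x"
  shows "(bit_at c (m - 1) = False \<longrightarrow>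
            real (gb_idx m x c) =
              (1/2) * (\<Sum>i\<in>{i. i \<le> m - 2 \<and> bit_at c i = True}.
                         real (N_card (int i - int x + 1) x)))
       \<and> (bit_at c (m - 1) = True \<longrightarrow>
            real (gb_idx m x c) =
              (1/2) * (\<Sum>i\<in>{i. i \<le> m - 2 \<and> bit_at c i = False}.
                         real (N_card (int i - int x + 1) x)))"
proof -
  have len: "length c = m" using assms(3) by (simp add: LOCO_def)
  have ne: "c \<noteq> []" using len assms(2) by auto
  have b0: "bit_at c (m-1) = hd c" using len ne unfolding bit_at_def by (cases c) auto
  have m1: "m \<ge> 1" using assms(2) by simp
  show ?thesis
  proof (intro conjI impI)
    assume h: "bit_at c (m - 1) = False"
    then have "gb_idx m x c = g_idx m x c" using b0 by (simp add: gb_idx_def)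
    moreover have "2 * g_idx m x c = Fw x (tl c)" using main_ind[OF assms(1) assms(3) m1] h b0 by simp
    ultimately show "real (gb_idx m x c) = (1/2) * (\<Sum>i\<in>{i. i \<le> m - 2 \<and> bit_at c i = True}.
                         real (N_card (int i - int x + 1) x))"
    proof -
      have "2 * real (g_idx m x c) = real (Fw x (tl c))"
        using \<open>2 * g_idx m x c = Fw x (tl c)\<close> by (metis of_nat_mult of_nat_numeral)
      then show ?thesis using sum_conv[OF len assms(2), of x] \<open>gb_idx m x c = g_idx m x c\<close> by simp
    qed
  next
    assume h: "bit_at c (m - 1) = True"
    have Nc: "N_card (int m) x = card (LOCO m x)" using assms(2) by (simp add: N_card_def)
    have gc: "g_idx m x (map Not c) + g_idx m x c + 1 = card (LOCO m x)"
      using g_compl[OF assms(3)] .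
    have "gb_idx m x c = g_idx m x (map Not c)" using h b0 Nc gc by (simp add: gb_idx_def)
    have ncL: "map Not c \<in> LOCO m x" using assms(3) LOCO_Not by blast
    have hn: "hd (map Not c) = False" using h b0 ne by (cases c) auto
    have g2: "2 * g_idx m x (map Not c) = Fw x (tl (map Not c))"
      using main_ind[OF assms(1) ncL m1 hn] .
    have lnc: "length (map Not c) = m" using len by simp
    have "{i. i \<le> m - 2 \<and> bit_at (map Not c) i = True} = {i. i \<le> m - 2 \<and> bit_at c i = False}"
      using len assms(2) by (auto simp: bit_at_def)
    then have sF: "(\<Sum>i\<in>{i. i \<le> m - 2 \<and> bit_at c i = False}. real (N_card (int i - int x + 1) x))
       = real (Fw x (tl (map Not c)))" using sum_conv[OF lnc assms(2), of x] by simp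
    then show "real (gb_idx m x c) = (1/2) * (\<Sum>i\<in>{i. i \<le> m - 2 \<and> bit_at c i = False}.
                         real (N_card (int i - int x + 1) x))"
    proof -
      have "2 * real (g_idx m x (map Not c)) = real (Fw x (tl (map Not c)))"
        using g2 by (metis of_nat_mult of_nat_numeral)
      then show ?thesis using \<open>gb_idx m x c = g_idx m x (map Not c)\<close> sF by simp
    qed
  qed
qed

end
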